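(* Let $S\ge2$, $\mathcal S=\{1,\dots,S\}$ and $T=3$. The union of the following two sets of moves is a Markov basis for the toric homogeneous Markov chain model on $\mathcal S^3$. (1) Crossing path swappings: for paths $\omega=(s_1,s_2,s_3)$, $\omega'=(s'_1,s'_2,s'_3)$ with $s_t=s'_t$ for some $t$, the move $e_\omega+e_{\omega'}-e_{\tilde\omega}-e_{\tilde\omega'}$ with $\tilde\omega=(s_1,\dots,s_t,s'_{t+1},\dots,s'_3)$, $\tilde\omega'=(s'_1,\dots,s'_t,s_{t+1},\dots,s_3)$. (2) The moves $\bar{\mathbf z}=\sum_{\omega\in W_1}e_\omega-\sum_{\omega\in W_2}e_\omega$, for all $m=2,\dots,S$, all distinct $i_1,\dots,i_m\in\mathcal S$, all distinct $j_1,\dots,j_m\in\mathcal S$, and all choices of states $s_j\in\mathcal S$ ($j\in\mathcal I\setminus\mathcal J$) and $\tilde s_j\in\mathcal S$ ($j\in\mathcal J\setminus\mathcal I$), where $\mathcal I=\{i_1,\dots,i_m\}$, $\mathcal J=\{j_1,\dots,j_m\}$ and, with indices taken cyclically ($j_0:=j_m$, $i_{m+1}:=i_1$): for $j=j_l\in\mathcal J$ put $i(j)=i_l$ and $i'(j)=i_{l+1}$; for $j=i_l\in\mathcal I$ put $k(j)=j_{l-1}$ and $k'(j)=j_l$; $$W_1=\{(i(j),j,k(j)):j\in\mathcal I\cap\mathcal J\}\cup\{(s_j,j,k(j)):j\in\mathcal I\setminus\mathcal J\}\cup\{(i(j),j,\tilde s_j):j\in\mathcal J\setminus\mathcal I\},$$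 $$W_2=\{(i'(j),j,k'(j)):j\in\mathcal I\cap\mathcal J\}\cup\{(s_j,j,k'(j)):j\in\mathcal I\setminus\mathcal J\}\cup\{(i'(j),j,\tilde s_j):j\in\mathcal J\setminus\mathcal I\}.$$
   Context: Paths are elements of $\mathcal S^3$; a contingency table is a function $\mathbf x:\mathcal S^3\to\mathbb Z_{\ge0}$, and $e_\omega$ is the table with a single path $\omega$. The toric homogeneous Markov chain model has sufficient statistic $\mathbf b(\mathbf x)=A\mathbf x$ consisting of initial-state counts $x^1_i=\sum_{\omega:\omega_1=i}x(\omega)$ and total transition counts $x^+_{ij}=\sum_\omega x(\omega)\,\#\{t\in\{1,2\}:\omega_t=i,\omega_{t+1}=j\}$. The fiber of $\mathbf b$ is the set of nonnegative integer tables $\mathbf x$ with $A\mathbf x=\mathbf b$; a move is an integer $\mathbf z$ with $A\mathbf z=0$. A set $\mathcal B$ of moves is a Markov basis if for every $\mathbf b$ and $\mathbf x,\mathbf y$ in the fiber of $\mathbf b$ there are $\mathbf z_1,\dots,\mathbf z_K\in\mathcal B\cup(-\mathcal B)$ with $\mathbf y=\mathbf x+\sum_k\mathbf z_k$ and all partial sums $\mathbf x+\sum_{k\le h}\mathbf z_k\ge0$. *)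

theory Defs
  imports Main
begin

type_synonym path = "nat \<times> nat \<times> nat"
type_synonym table = "path \<Rightarrow> int"

definition states :: "nat \<Rightarrow> nat set" where
  "states S = {1..S}"

definition paths :: "nat \<Rightarrow> path set" where
  "paths S = states S \<times> states S \<times> states S"

definition is_table :: "nat \<Rightarrow> table \<Rightarrow> bool" where
  "is_table S x \<longleftrightarrow> (\<forall>w. w \<notin> paths S \<longrightarrow> x w = 0) \<and> (\<forall>w. x w \<ge> 0)"

definition unit_table :: "path \<Rightarrow> table" ("e") where
  "e w = (\<lambda>v. if v = w then 1 else 0)"

definition comp :: "path \<Rightarrow> nat \<Rightarrow> nat" where
  "comp w t = (if t = 1 then fst w else if t = 2 then fst (snd w) else snd (snd w))"

definition init_count :: "nat \<Rightarrow> table \<Rightarrow> nat \<Rightarrow> int" where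
  "init_count S x i = (\<Sum>w\<in>paths S. if comp w 1 = i then x w else 0)"

definition trans_count :: "nat \<Rightarrow> table \<Rightarrow> nat \<Rightarrow> nat \<Rightarrow> int" where
  "trans_count S x i j = (\<Sum>w\<in>paths S. x w *
      int (card {t \<in> {1,2::nat}. comp w t = i \<and> comp w (t+1) = j}))"

definition suff_stat :: "nat \<Rightarrow> table \<Rightarrow> (nat \<Rightarrow> int) \<times> (nat \<Rightarrow> nat \<Rightarrow> int)" where
  "suff_stat S x = ((\<lambda>i. if i \<in> states S then init_count S x i else 0),
                    (\<lambda>i j. if i \<in> states S \<and> j \<in> states S then trans_count S x i j else 0))"

definition is_move :: "nat \<Rightarrow> table \<Rightarrow> bool" where
  "is_move S z \<longleftrightarrow> (\<forall>w. w \<notin> paths S \<longrightarrow> z w = 0) \<and>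
      suff_stat S z = suff_stat S (\<lambda>_. 0)"

definition markov_basis :: "nat \<Rightarrow> table set \<Rightarrow> bool" where
  "markov_basis S B \<longleftrightarrow> (\<forall>z\<in>B. is_move S z) \<and>
    (\<forall>x y. is_table S x \<and> is_table S y \<and> suff_stat S x = suff_stat S y \<longrightarrow>
      (\<exists>zs :: table list.
         (\<forall>k<length zs. \<exists>z\<in>B. zs ! k = z \<or> zs ! k = (\<lambda>w. - z w)) \<and>
         (\<forall>w. y w = x w + (\<Sum>k<length zs. (zs ! k) w)) \<and>
         (\<forall>h\<le>length zs. \<forall>w. x w + (\<Sum>k<h. (zs ! k) w) \<ge> 0)))"

text \<open>(1) Crossing path swappings.  splice t w w' = (w_1..w_t, w'_{t+1}..w'_3).\<close>
definition splice :: "nat \<Rightarrow> path \<Rightarrow> path \<Rightarrow> path" where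
  "splice t w w' = (comp (if 1 \<le> t then w else w') 1,
                    comp (if 2 \<le> t then w else w') 2,
                    comp (if 3 \<le> t then w else w') 3)"

definition crossing_swaps :: "nat \<Rightarrow> table set" where
  "crossing_swaps S = {(\<lambda>v. e w v + e w' v - e (splice t w w') v - e (splice t w' w) v) | w w' t.
      w \<in> paths S \<and> w' \<in> paths S \<and> t \<in> {1,2,3} \<and> comp w t = comp w' t}"

definition nxt :: "nat \<Rightarrow> nat \<Rightarrow> nat" where "nxt m l = (if l = m then 1 else l + 1)"
definition prv :: "nat \<Rightarrow> nat \<Rightarrow> nat" where "prv m l = (if l = 1 then m else l - 1)"

definition W1 :: "nat \<Rightarrow> (nat \<Rightarrow> nat) \<Rightarrow> (nat \<Rightarrow> nat) \<Rightarrow> (nat \<Rightarrow> nat) \<Rightarrow> (nat \<Rightarrow> nat) \<Rightarrow> path set" where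
  "W1 m i j s st =
    (let I = i ` {1..m}; J = j ` {1..m};
         ii = (\<lambda>x. i (the_inv_into {1..m} j x));
         kk = (\<lambda>x. j (prv m (the_inv_into {1..m} i x)))
     in (\<lambda>x. (ii x, x, kk x)) ` (I \<inter> J) \<union> (\<lambda>x. (s x, x, kk x)) ` (I - J)
        \<union> (\<lambda>x. (ii x, x, st x)) ` (J - I))"

definition W2 :: "nat \<Rightarrow> (nat \<Rightarrow> nat) \<Rightarrow> (nat \<Rightarrow> nat) \<Rightarrow> (nat \<Rightarrow> nat) \<Rightarrow> (nat \<Rightarrow> nat) \<Rightarrow> path set" where
  "W2 m i j s st =
    (let I = i ` {1..m}; J = j ` {1..m};
         ii' = (\<lambda>x. i (nxt m (the_inv_into {1..m} j x)));
         kk' = (\<lambda>x. j (the_inv_into {1..m} i x))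
     in (\<lambda>x. (ii' x, x, kk' x)) ` (I \<inter> J) \<union> (\<lambda>x. (s x, x, kk' x)) ` (I - J)
        \<union> (\<lambda>x. (ii' x, x, st x)) ` (J - I))"

definition zbar :: "nat \<Rightarrow> (nat \<Rightarrow> nat) \<Rightarrow> (nat \<Rightarrow> nat) \<Rightarrow> (nat \<Rightarrow> nat) \<Rightarrow> (nat \<Rightarrow> nat) \<Rightarrow> table" where
  "zbar m i j s st = (\<lambda>v. (\<Sum>w\<in>W1 m i j s st. e w v) - (\<Sum>w\<in>W2 m i j s st. e w v))"

definition zbar_moves :: "nat \<Rightarrow> table set" where
  "zbar_moves S = {zbar m i j s st | m i j s st.
      2 \<le> m \<and> m \<le> S \<and>
      inj_on i {1..m} \<and> i ` {1..m} \<subseteq> states S \<and>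
      inj_on j {1..m} \<and> j ` {1..m} \<subseteq> states S \<and>
      s ` (i ` {1..m} - j ` {1..m}) \<subseteq> states S \<and>
      st ` (j ` {1..m} - i ` {1..m}) \<subseteq> states S}"

end

theory Submission
  imports Defs
begin


definition PP :: "nat \<Rightarrow> table \<Rightarrow> nat \<Rightarrow> nat \<Rightarrow> int" where
  "PP S x a b = (\<Sum>c\<in>states S. x (a,b,c))"
definition QQ :: "nat \<Rightarrow> table \<Rightarrow> nat \<Rightarrow> nat \<Rightarrow> int" where
  "QQ S x b c = (\<Sum>a\<in>states S. x (a,b,c))"

lemma finite_states[simp]: "finite (states S)" by (simp add: states_def)
lemma finite_paths[simp]: "finite (paths S)" by (simp add: paths_def)
lemma mem_paths: "(a,b,c) \<in> paths S \<longleftrightarrow> a \<in> states S \<and> b \<in> states S \<and> c \<in> states S"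
  by (simp add: paths_def)

lemma sum_paths: "(\<Sum>w\<in>paths S. f w) = (\<Sum>a\<in>states S. \<Sum>b\<in>states S. \<Sum>c\<in>states S. f (a,b,c))"
proof -
  have "(\<Sum>a\<in>states S. \<Sum>b\<in>states S. \<Sum>c\<in>states S. f (a,b,c))
      = (\<Sum>a\<in>states S. \<Sum>(b,c)\<in>states S \<times> states S. f (a,b,c))"
    by (simp add: sum.cartesian_product)
  also have "\<dots> = (\<Sum>(a,bc)\<in>states S \<times> (states S \<times> states S). f (a,bc))"
    by (subst sum.cartesian_product[symmetric]) (simp add: case_prod_beta')
  finally show ?thesis by (simp add: paths_def case_prod_beta')
qed

lemma comp_simps[simp]: "comp (a,b,c) 1 = a" "comp (a,b,c) 2 = b" "comp (a,b,c) 3 = c"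
  by (auto simp: comp_def)

lemma comp_simps2[simp]: "comp (a,b,c) (Suc 0) = a" "comp (a,b,c) (Suc (Suc 0)) = b"
  by (auto simp: comp_def)

lemma sum_if_const: "(\<Sum>c\<in>C. if P then f c else 0) = (if P then sum f C else (0::'a::comm_monoid_add))"
  by auto

lemma init_count_PP: "i \<in> states S \<Longrightarrow> init_count S x i = (\<Sum>b\<in>states S. PP S x i b)"
proof -
  assume i: "i \<in> states S"
  have "init_count S x i = (\<Sum>a\<in>states S. if a = i then (\<Sum>b\<in>states S. \<Sum>c\<in>states S. x (a,b,c)) else 0)"
    unfolding init_count_def sum_paths by (rule sum.cong) auto
  also have "\<dots> = (\<Sum>b\<in>states S. PP S x i b)" using i by (simp add: PP_def)
  finally show ?thesis .
qed

lemma card_t: "int (card {t \<in> {1,2::nat}. comp (a,b,c) t = i \<and> comp (a,b,c) (t+1) = j})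
   = (if a = i \<and> b = j then 1 else 0) + (if b = i \<and> c = j then 1 else 0)"
proof -
  have "{t \<in> {1,2::nat}. comp (a,b,c) t = i \<and> comp (a,b,c) (t+1) = j}
     = (if a = i \<and> b = j then {1} else {}) \<union> (if b = i \<and> c = j then {2} else {})"
    by (auto simp: comp_def)
  then show ?thesis by auto
qed

lemma trans_count_PQ: "i \<in> states S \<Longrightarrow> j \<in> states S \<Longrightarrow>
   trans_count S x i j = PP S x i j + QQ S x i j"
proof -
  assume i: "i \<in> states S" and j: "j \<in> states S"
  have "trans_count S x i j = (\<Sum>a\<in>states S. \<Sum>b\<in>states S. \<Sum>c\<in>states S.
      (if a = i then (if b = j then x (a,b,c) else 0) else 0) + (if c = j then (if b = i then x (a,b,c) else 0) else 0))"
    unfolding trans_count_def sum_paths card_t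
    by (intro sum.cong refl) (auto simp: distrib_left)
  also have "\<dots> = (\<Sum>a\<in>states S. \<Sum>b\<in>states S. \<Sum>c\<in>states S.
      (if a = i then (if b = j then x (a,b,c) else 0) else 0))
    + (\<Sum>a\<in>states S. \<Sum>b\<in>states S. \<Sum>c\<in>states S. (if c = j then (if b = i then x (a,b,c) else 0) else 0))"
    by (simp add: sum.distrib)
  also have "\<dots> = PP S x i j + QQ S x i j"
    using i j by (simp add: PP_def QQ_def sum_if_const)
  finally show ?thesis .
qed


lemma suff_eq: "suff_stat S x = suff_stat S y \<longleftrightarrow>
  (\<forall>i\<in>states S. (\<Sum>b\<in>states S. PP S x i b) = (\<Sum>b\<in>states S. PP S y i b)) \<and>
  (\<forall>i\<in>states S. \<forall>j\<in>states S. PP S x i j + QQ S x i j = PP S y i j + QQ S y i j)"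
  (is "?L \<longleftrightarrow> ?R1 \<and> ?R2")
proof
  assume h: ?L
  have 1: "fst (suff_stat S x) i = fst (suff_stat S y) i" for i using h by simp
  have 2: "snd (suff_stat S x) i j = snd (suff_stat S y) i j" for i j using h by simp
  show "?R1 \<and> ?R2"
  proof (intro conjI ballI)
    fix i assume i: "i \<in> states S"
    have "init_count S x i = init_count S y i" using 1[of i] i
      by (simp only: suff_stat_def fst_conv if_True)
    then show "(\<Sum>b\<in>states S. PP S x i b) = (\<Sum>b\<in>states S. PP S y i b)"
      using i by (simp only: init_count_PP)
  next
    fix i j assume i: "i \<in> states S" and j: "j \<in> states S"
    have "trans_count S x i j = trans_count S y i j" using 2[of i j] i j
      by (simp only: suff_stat_def snd_conv conj_absorb simp_thms if_True)
    then show "PP S x i j + QQ S x i j = PP S y i j + QQ S y i j"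
      using i j by (simp only: trans_count_PQ)
  qed
next
  assume h: "?R1 \<and> ?R2"
  have a: "(\<lambda>i. if i \<in> states S then init_count S x i else 0) = (\<lambda>i. if i \<in> states S then init_count S y i else 0)"
  proof
    fix i show "(if i \<in> states S then init_count S x i else 0) = (if i \<in> states S then init_count S y i else 0)"
      using h by (cases "i \<in> states S") (simp_all only: init_count_PP if_True if_False)
  qed
  have b: "(\<lambda>i j. if i \<in> states S \<and> j \<in> states S then trans_count S x i j else 0) = (\<lambda>i j. if i \<in> states S \<and> j \<in> states S then trans_count S y i j else 0)"
  proof (intro ext)
    fix i j show "(if i \<in> states S \<and> j \<in> states S then trans_count S x i j else 0) = (if i \<in> states S \<and> j \<in> states S then trans_count S y i j else 0)"
    proof (cases "i \<in> states S \<and> j \<in> states S")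
      case True then show ?thesis using h by (simp only: trans_count_PQ if_True)
    next
      case False then show ?thesis by (simp only: False if_False)
    qed
  qed
  show ?L unfolding suff_stat_def using a b by (simp only:)
qed

lemma PP_add: "PP S (\<lambda>v. x v + z v) a b = PP S x a b + PP S z a b" by (simp add: PP_def sum.distrib)
lemma QQ_add: "QQ S (\<lambda>v. x v + z v) a b = QQ S x a b + QQ S z a b" by (simp add: QQ_def sum.distrib)
lemma PP_diff: "PP S (\<lambda>v. x v - z v) a b = PP S x a b - PP S z a b" by (simp add: PP_def sum_subtractf)
lemma QQ_diff: "QQ S (\<lambda>v. x v - z v) a b = QQ S x a b - QQ S z a b" by (simp add: QQ_def sum_subtractf)
lemma PP_zero: "PP S (\<lambda>_. 0) a b = 0" by (simp add: PP_def)
lemma QQ_zero: "QQ S (\<lambda>_. 0) a b = 0" by (simp add: QQ_def)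
lemma PP_nonneg: "is_table S x \<Longrightarrow> PP S x a b \<ge> 0" by (simp add: PP_def is_table_def sum_nonneg)
lemma QQ_nonneg: "is_table S x \<Longrightarrow> QQ S x a b \<ge> 0" by (simp add: QQ_def is_table_def sum_nonneg)

lemma is_move_intro:
  assumes "\<forall>w. w \<notin> paths S \<longrightarrow> z w = 0"
    "\<forall>i\<in>states S. (\<Sum>b\<in>states S. PP S z i b) = 0"
    "\<forall>i\<in>states S. \<forall>j\<in>states S. PP S z i j + QQ S z i j = 0"
  shows "is_move S z"
  unfolding is_move_def using assms by (simp add: suff_eq PP_zero QQ_zero)

lemma middle_eq: "(\<Sum>a\<in>states S. PP S x a b) = (\<Sum>c\<in>states S. QQ S x b c)"
  unfolding PP_def QQ_def by (rule sum.swap)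

definition conn :: "table set \<Rightarrow> table \<Rightarrow> table \<Rightarrow> bool" where
  "conn B x y \<longleftrightarrow> (\<exists>zs :: table list.
         (\<forall>k<length zs. \<exists>z\<in>B. zs ! k = z \<or> zs ! k = (\<lambda>w. - z w)) \<and>
         (\<forall>w. y w = x w + (\<Sum>k<length zs. (zs ! k) w)) \<and>
         (\<forall>h\<le>length zs. \<forall>w. x w + (\<Sum>k<h. (zs ! k) w) \<ge> 0))"

lemma conn_refl: "\<forall>w. x w \<ge> 0 \<Longrightarrow> conn B x x"
  unfolding conn_def by (rule exI[of _ "[]"]) simp

lemma conn_step: assumes "z \<in> B" "\<forall>w. x w \<ge> 0" "\<forall>w. x w + z w \<ge> 0"
  shows "conn B x (\<lambda>w. x w + z w)"
proof -
  have "\<forall>h\<le>length [z]. \<forall>w. x w + (\<Sum>k<h. ([z] ! k) w) \<ge> 0"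
  proof (intro allI impI)
    fix h w assume "h \<le> length [z]"
    then have "h = 0 \<or> h = 1" by auto
    then show "x w + (\<Sum>k<h. ([z] ! k) w) \<ge> 0" using assms(2)[rule_format, of w] assms(3)[rule_format, of w] by auto
  qed
  then show ?thesis unfolding conn_def using assms by (intro exI[of _ "[z]"]) auto
qed

lemma conn_step_neg: assumes "z \<in> B" "\<forall>w. x w \<ge> 0" "\<forall>w. x w - z w \<ge> 0"
  shows "conn B x (\<lambda>w. x w - z w)"
proof -
  have "\<forall>h\<le>length [(\<lambda>w. - z w)]. \<forall>w. x w + (\<Sum>k<h. ([(\<lambda>w. - z w)] ! k) w) \<ge> 0"
  proof (intro allI impI)
    fix h w assume "h \<le> length [(\<lambda>w. - z w)]"
    then have "h = 0 \<or> h = 1" by auto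
    then show "x w + (\<Sum>k<h. ([(\<lambda>w. - z w)] ! k) w) \<ge> 0" using assms(2)[rule_format, of w] assms(3)[rule_format, of w] by auto
  qed
  then show ?thesis unfolding conn_def using assms by (intro exI[of _ "[(\<lambda>w. - z w)]"]) auto
qed

lemma sum_lessThan_add: "(\<Sum>k<a+(b::nat). f k) = (\<Sum>k<a. f k) + (\<Sum>k<b. f (a+k))"
  by (induction b) (auto simp: add.assoc)

lemma conn_trans: assumes "conn B x y" "conn B y u" shows "conn B x u"
proof -
  obtain zs1 where z1: "\<forall>k<length zs1. \<exists>z\<in>B. zs1 ! k = z \<or> zs1 ! k = (\<lambda>w. - z w)"
    "\<forall>w. y w = x w + (\<Sum>k<length zs1. (zs1 ! k) w)"
    "\<forall>h\<le>length zs1. \<forall>w. x w + (\<Sum>k<h. (zs1 ! k) w) \<ge> 0"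
    using assms(1) unfolding conn_def by blast
  obtain zs2 where z2: "\<forall>k<length zs2. \<exists>z\<in>B. zs2 ! k = z \<or> zs2 ! k = (\<lambda>w. - z w)"
    "\<forall>w. u w = y w + (\<Sum>k<length zs2. (zs2 ! k) w)"
    "\<forall>h\<le>length zs2. \<forall>w. y w + (\<Sum>k<h. (zs2 ! k) w) \<ge> 0"
    using assms(2) unfolding conn_def by blast
  let ?zs = "zs1 @ zs2"
  let ?n = "length zs1"
  have pre: "(\<Sum>k<h. (?zs ! k) w) = (\<Sum>k<h. (zs1 ! k) w)" if "h \<le> ?n" for h w
    using that by (intro sum.cong) (auto simp: nth_append)
  have post: "(\<Sum>k<?n + h. (?zs ! k) w) = (\<Sum>k<?n. (zs1 ! k) w) + (\<Sum>k<h. (zs2 ! k) w)" for h w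
    by (subst sum_lessThan_add) (simp add: pre nth_append)
  show ?thesis unfolding conn_def
  proof (rule exI[of _ ?zs], intro conjI allI impI)
    fix k assume "k < length ?zs"
    then show "\<exists>z\<in>B. ?zs ! k = z \<or> ?zs ! k = (\<lambda>w. - z w)"
      using z1(1) z2(1) by (cases "k < ?n") (auto simp: nth_append)
  next
    fix w show "u w = x w + (\<Sum>k<length ?zs. (?zs ! k) w)"
      using post[where h="length zs2" and w=w] z1(2)[rule_format, of w] z2(2)[rule_format, of w] by simp
  next
    fix h w assume h: "h \<le> length ?zs"
    show "x w + (\<Sum>k<h. (?zs ! k) w) \<ge> 0"
    proof (cases "h \<le> ?n")
      case True then show ?thesis using pre[OF True, of w] z1(3)[rule_format, OF True, of w] by simp
    next
      case False
      define h2 where "h2 = h - ?n"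
      have hh: "h = ?n + h2" using False h2_def by simp
      have h2l: "h2 \<le> length zs2" using h h2_def by simp
      have "x w + (\<Sum>k<h. (?zs ! k) w) = y w + (\<Sum>k<h2. (zs2 ! k) w)"
        unfolding hh post using z1(2)[rule_format, of w] by simp
      also have "\<dots> \<ge> 0" using z2(3) h2l by blast
      finally show ?thesis .
    qed
  qed
qed


lemma PP_e: "PP S (e p) a b = (if fst p = a \<and> fst (snd p) = b \<and> snd (snd p) \<in> states S then 1 else 0)"
proof -
  obtain p1 p2 p3 where p: "p = (p1,p2,p3)" by (cases p) auto
  show ?thesis unfolding PP_def unit_table_def p by (auto simp: sum_if_const intro!: sum.neutral)
qed

lemma QQ_e: "QQ S (e p) b c = (if fst (snd p) = b \<and> snd (snd p) = c \<and> fst p \<in> states S then 1 else 0)"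
proof -
  obtain p1 p2 p3 where p: "p = (p1,p2,p3)" by (cases p) auto
  show ?thesis unfolding QQ_def unit_table_def p by (auto simp: sum_if_const intro!: sum.neutral)
qed

lemma is_move_zeroPQ:
  assumes "\<forall>w. w \<notin> paths S \<longrightarrow> z w = 0" "\<And>a b. PP S z a b = 0" "\<And>a b. QQ S z a b = 0"
  shows "is_move S z"
  using assms by (intro is_move_intro) auto

definition swp :: "path \<Rightarrow> path \<Rightarrow> path \<Rightarrow> path \<Rightarrow> table" where
  "swp p1 p2 p3 p4 = (\<lambda>v. e p1 v + e p2 v - e p3 v - e p4 v)"

lemma swp_move:
  assumes "a \<in> states S" "a' \<in> states S" "b \<in> states S" "c \<in> states S" "c' \<in> states S"
  shows "is_move S (swp (a,b,c) (a',b,c') (a,b,c') (a',b,c))"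
proof (rule is_move_zeroPQ)
  show "\<forall>w. w \<notin> paths S \<longrightarrow> swp (a,b,c) (a',b,c') (a,b,c') (a',b,c) w = 0"
    using assms by (auto simp: swp_def unit_table_def mem_paths)
  fix x y
  show "PP S (swp (a,b,c) (a',b,c') (a,b,c') (a',b,c)) x y = 0"
    unfolding swp_def PP_diff PP_add PP_e using assms by auto
  show "QQ S (swp (a,b,c) (a',b,c') (a,b,c') (a',b,c)) x y = 0"
    unfolding swp_def QQ_diff QQ_add QQ_e using assms by auto
qed

lemma cs_move: assumes "z \<in> crossing_swaps S" shows "is_move S z"
proof -
  obtain w w' t where z: "z = (\<lambda>v. e w v + e w' v - e (splice t w w') v - e (splice t w' w) v)"
    and w: "w \<in> paths S" "w' \<in> paths S" and t: "t \<in> {1,2,3}" and ct: "comp w t = comp w' t"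
    using assms unfolding crossing_swaps_def by blast
  obtain a b c where wa: "w = (a,b,c)" by (cases w) auto
  obtain a' b' c' where wa': "w' = (a',b',c')" by (cases w') auto
  have st: "a \<in> states S" "b \<in> states S" "c \<in> states S" "a' \<in> states S" "b' \<in> states S" "c' \<in> states S"
    using w wa wa' by (auto simp: mem_paths)
  have z0: "is_move S (\<lambda>_. 0)" by (rule is_move_zeroPQ) (auto simp: PP_zero QQ_zero)
  from t consider "t = 1" | "t = 2" | "t = 3" by auto
  then show ?thesis
  proof cases
    case 1
    then have "z = (\<lambda>_. 0)" using ct unfolding z wa wa' by (auto simp: splice_def comp_def)
    then show ?thesis using z0 by simp
  next
    case 3
    then have "z = (\<lambda>_. 0)" using ct unfolding z wa wa' by (auto simp: splice_def comp_def)
    then show ?thesis using z0 by simp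
  next
    case 2
    then have bb: "b' = b" using ct wa wa' by (simp add: comp_def)
    have "z = swp (a,b,c) (a',b,c') (a,b,c') (a',b,c)"
      using 2 unfolding z wa wa' bb swp_def by (auto simp: splice_def comp_def)
    then show ?thesis using swp_move st by simp
  qed
qed

lemma swp_in_cs:
  assumes "(a,b,c) \<in> paths S" "(a',b,c') \<in> paths S"
  shows "swp (a,b,c) (a',b,c') (a,b,c') (a',b,c) \<in> crossing_swaps S"
proof -
  have "splice 2 (a,b,c) (a',b,c') = (a,b,c')" "splice 2 (a',b,c') (a,b,c) = (a',b,c)"
    by (auto simp: splice_def comp_def)
  then have "swp (a,b,c) (a',b,c') (a,b,c') (a',b,c) = (\<lambda>v. e (a,b,c) v + e (a',b,c') v - e (splice 2 (a,b,c) (a',b,c')) v - e (splice 2 (a',b,c') (a,b,c)) v)"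
    by (simp add: swp_def)
  then show ?thesis unfolding crossing_swaps_def using assms by fastforce
qed

lemma ex_less:
  fixes f g :: "'a \<Rightarrow> int"
  assumes "finite A" "sum f A = sum g A" "a \<in> A" "f a > g a"
  shows "\<exists>c\<in>A. f c < g c"
proof (rule ccontr)
  assume "\<not> ?thesis"
  then have "\<forall>c\<in>A. g c \<le> f c" by auto
  then have "sum g A < sum f A" using assms by (intro sum_strict_mono_ex1) auto
  then show False using assms by simp
qed

lemma sum_e: "p \<in> paths S \<Longrightarrow> (\<Sum>v\<in>paths S. e p v) = 1"
  by (simp add: unit_table_def)

lemma sum_x_PP: "(\<Sum>w\<in>paths S. x w) = (\<Sum>a\<in>states S. \<Sum>b\<in>states S. PP S x a b)"
  by (simp add: sum_paths PP_def)


abbreviation "BB S \<equiv> crossing_swaps S \<union> zbar_moves S"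

lemma table_eq: "is_table S x \<Longrightarrow> is_table S y \<Longrightarrow> \<forall>w\<in>paths S. x w = y w \<Longrightarrow> x = y"
  unfolding is_table_def by (metis ext)

lemma lemA:
  assumes "is_table S x" "is_table S y"
    "\<forall>a\<in>states S. \<forall>b\<in>states S. PP S x a b = PP S y a b"
    "\<forall>b\<in>states S. \<forall>c\<in>states S. QQ S x b c = QQ S y b c"
  shows "conn (BB S) x y"
  using assms
proof (induction "nat (\<Sum>w\<in>paths S. \<bar>x w - y w\<bar>)" arbitrary: x rule: less_induct)
  case less
  note tx = less.prems(1) and ty = less.prems(2) and Pxy = less.prems(3) and Qxy = less.prems(4)
  have x0: "\<forall>w. x w \<ge> 0" using tx by (simp add: is_table_def)
  show ?case
  proof (cases "\<forall>w\<in>paths S. x w = y w")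
    case True
    then have "x = y" using table_eq tx ty by blast
    then show ?thesis using conn_refl x0 by blast
  next
    case False
    have sxy: "(\<Sum>w\<in>paths S. x w) = (\<Sum>w\<in>paths S. y w)"
      unfolding sum_x_PP using Pxy by simp
    have "\<exists>w\<in>paths S. x w > y w"
    proof (rule ccontr)
      assume "\<not> ?thesis"
      then have le: "\<forall>w\<in>paths S. x w \<le> y w" by auto
      then obtain w0 where "w0 \<in> paths S" "x w0 < y w0" using False by force
      then have "(\<Sum>w\<in>paths S. x w) < (\<Sum>w\<in>paths S. y w)"
        using le by (intro sum_strict_mono_ex1) auto
      then show False using sxy by simp
    qed
    then obtain a b c where abc: "(a,b,c) \<in> paths S" "x (a,b,c) > y (a,b,c)" by auto
    then have sa: "a \<in> states S" "b \<in> states S" "c \<in> states S" by (auto simp: mem_paths)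
    have "\<exists>c'\<in>states S. x (a,b,c') < y (a,b,c')"
      using ex_less[of "states S" "\<lambda>c. x (a,b,c)" "\<lambda>c. y (a,b,c)" c] Pxy sa abc
      unfolding PP_def by auto
    then obtain c' where c': "c' \<in> states S" "x (a,b,c') < y (a,b,c')" by auto
    have "\<exists>a'\<in>states S. y (a',b,c') < x (a',b,c')"
      using ex_less[of "states S" "\<lambda>a. y (a,b,c')" "\<lambda>a. x (a,b,c')" a] Qxy sa c'
      unfolding QQ_def by auto
    then obtain a' where a': "a' \<in> states S" "y (a',b,c') < x (a',b,c')" by auto
    have ne: "a \<noteq> a'" "c \<noteq> c'" using abc c' a' by auto
    define z where "z = swp (a,b,c') (a',b,c) (a,b,c) (a',b,c')"
    have zcs: "z \<in> BB S" unfolding z_def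
      using swp_in_cs[of a b c' S a' c] sa a' c' by (auto simp: mem_paths)
    have zmv: "is_move S z" unfolding z_def using swp_move[of a S a' b c' c] sa a' c' by simp
    define x1 where "x1 = (\<lambda>w. x w + z w)"
    have x10: "\<forall>w. x1 w \<ge> 0"
    proof
      fix w
      have y0: "\<forall>w. y w \<ge> 0" using ty by (simp add: is_table_def)
      have "x (a,b,c) \<ge> 1" "x (a',b,c') \<ge> 1" using abc a' y0 by (smt (verit))+
      then show "x1 w \<ge> 0"
        using x0[rule_format, of w] ne
        unfolding x1_def z_def swp_def unit_table_def by auto
    qed
    have tx1: "is_table S x1"
      using tx x10 zmv unfolding is_table_def is_move_def x1_def by auto
    have P1: "\<forall>a\<in>states S. \<forall>b\<in>states S. PP S x1 a b = PP S y a b"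
      using Pxy zmv unfolding x1_def PP_add z_def swp_def PP_diff PP_add PP_e using sa a' c' by auto
    have Q1: "\<forall>b\<in>states S. \<forall>c\<in>states S. QQ S x1 b c = QQ S y b c"
      using Qxy zmv unfolding x1_def QQ_add z_def swp_def QQ_diff QQ_add QQ_e using sa a' c' by auto
    define h where "h = (\<lambda>v. e (a',b,c) v - e (a,b,c) v - e (a',b,c') v - e (a,b,c') v)"
    have pw: "\<bar>x1 v - y v\<bar> \<le> \<bar>x v - y v\<bar> + h v" for v
      using abc a' c' ne unfolding x1_def z_def swp_def h_def unit_table_def
      by (cases "v = (a,b,c)"; cases "v = (a',b,c)"; cases "v = (a,b,c')"; cases "v = (a',b,c')") auto
    have "(\<Sum>v\<in>paths S. h v) = -2"
      unfolding h_def using sa a' c' by (simp add: sum_subtractf sum_e mem_paths)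
    then have "(\<Sum>w\<in>paths S. \<bar>x1 w - y w\<bar>) \<le> (\<Sum>w\<in>paths S. \<bar>x w - y w\<bar>) - 2"
      using sum_mono[of "paths S" "\<lambda>v. \<bar>x1 v - y v\<bar>" "\<lambda>v. \<bar>x v - y v\<bar> + h v", OF pw]
      by (simp add: sum.distrib)
    moreover have "(\<Sum>w\<in>paths S. \<bar>x1 w - y w\<bar>) \<ge> 0" by (simp add: sum_nonneg)
    ultimately have "nat (\<Sum>w\<in>paths S. \<bar>x1 w - y w\<bar>) < nat (\<Sum>w\<in>paths S. \<bar>x w - y w\<bar>)"
      by linarith
    then have c2: "conn (BB S) x1 y" using less.hyps tx1 ty P1 Q1 by blast
    have c1: "conn (BB S) x x1" unfolding x1_def using conn_step[OF zcs x0] x10 unfolding x1_def by blast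
    show ?thesis using conn_trans[OF c1 c2] .
  qed
qed




lemma transport:
  fixes r s :: "nat \<Rightarrow> int"
  assumes "finite A" "finite C" "\<forall>a\<in>A. r a \<ge> 0" "\<forall>c\<in>C. s c \<ge> 0" "sum r A = sum s C"
  shows "\<exists>M::nat\<Rightarrow>nat\<Rightarrow>int. (\<forall>a c. M a c \<ge> 0) \<and> (\<forall>a\<in>A. (\<Sum>c\<in>C. M a c) = r a)
           \<and> (\<forall>c\<in>C. (\<Sum>a\<in>A. M a c) = s c)"
  using assms(3-5)
proof (induction "nat (sum r A)" arbitrary: r s rule: less_induct)
  case less
  show ?case
  proof (cases "sum r A = 0")
    case True
    then have r0: "\<forall>a\<in>A. r a = 0" using less.prems(1) assms(1) by (simp add: sum_nonneg_eq_0_iff)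
    have "sum s C = 0" using True less.prems(3) by simp
    then have s0: "\<forall>c\<in>C. s c = 0" using less.prems(2) assms(2) by (simp add: sum_nonneg_eq_0_iff)
    show ?thesis using r0 s0 by (intro exI[of _ "\<lambda>_ _. 0"]) auto
  next
    case False
    have "sum r A \<ge> 0" using less.prems(1) by (simp add: sum_nonneg)
    then have "sum r A > 0" using False by simp
    have "\<exists>a\<in>A. r a > 0"
    proof (rule ccontr)
      assume "\<not> ?thesis" then have "\<forall>a\<in>A. r a \<le> 0" by auto
      then have "sum r A \<le> 0" by (simp add: sum_nonpos)
      then show False using \<open>sum r A > 0\<close> by simp
    qed
    then obtain a where a: "a \<in> A" "r a > 0" by blast
    have "sum s C > 0" using \<open>sum r A > 0\<close> less.prems by simp
    have "\<exists>c\<in>C. s c > 0"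
    proof (rule ccontr)
      assume "\<not> ?thesis" then have "\<forall>a\<in>C. s a \<le> 0" by auto
      then have "sum s C \<le> 0" by (simp add: sum_nonpos)
      then show False using \<open>sum s C > 0\<close> by simp
    qed
    then obtain c where c: "c \<in> C" "s c > 0" by blast
    define r' where "r' = (\<lambda>x. r x - (if x = a then 1 else 0))"
    define s' where "s' = (\<lambda>x. s x - (if x = c then 1 else 0))"
    have sr': "sum r' A = sum r A - 1" unfolding r'_def using a assms(1) by (simp add: sum_subtractf)
    have ss': "sum s' C = sum s C - 1" unfolding s'_def using c assms(2) by (simp add: sum_subtractf)
    have "nat (sum r' A) < nat (sum r A)" using sr' \<open>sum r A > 0\<close> by simp
    moreover have "\<forall>a\<in>A. r' a \<ge> 0" using less.prems a unfolding r'_def by auto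
    moreover have "\<forall>c\<in>C. s' c \<ge> 0" using less.prems c unfolding s'_def by auto
    moreover have "sum r' A = sum s' C" using sr' ss' less.prems by simp
    ultimately obtain M where M: "\<forall>a c. M a c \<ge> 0" "\<forall>a\<in>A. (\<Sum>c\<in>C. M a c) = r' a"
           "\<forall>c\<in>C. (\<Sum>a\<in>A. M a c) = s' c" using less.hyps by blast
    define M' where "M' = (\<lambda>x y. M x y + (if x = a \<and> y = c then 1 else 0))"
    have "\<forall>x\<in>A. (\<Sum>y\<in>C. M' x y) = r x"
      using M(2) c assms(2) unfolding M'_def r'_def by (simp add: sum.distrib)
    moreover have "\<forall>y\<in>C. (\<Sum>x\<in>A. M' x y) = s y"
      using M(3) a assms(1) unfolding M'_def s'_def by (simp add: sum.distrib)
    moreover have "\<forall>x y. M' x y \<ge> 0" using M(1) unfolding M'_def by simp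
    ultimately show ?thesis by blast
  qed
qed


lemma realize:
  fixes P Q :: "nat \<Rightarrow> nat \<Rightarrow> int"
  assumes "\<forall>a\<in>states S. \<forall>b\<in>states S. P a b \<ge> 0" "\<forall>b\<in>states S. \<forall>c\<in>states S. Q b c \<ge> 0"
    "\<forall>b\<in>states S. (\<Sum>a\<in>states S. P a b) = (\<Sum>c\<in>states S. Q b c)"
  shows "\<exists>x0. is_table S x0 \<and> (\<forall>a\<in>states S. \<forall>b\<in>states S. PP S x0 a b = P a b)
     \<and> (\<forall>b\<in>states S. \<forall>c\<in>states S. QQ S x0 b c = Q b c)"
proof -
  have "\<forall>b\<in>states S. \<exists>M::nat\<Rightarrow>nat\<Rightarrow>int. (\<forall>a c. M a c \<ge> 0) \<and> (\<forall>a\<in>states S. (\<Sum>c\<in>states S. M a c) = P a b)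
           \<and> (\<forall>c\<in>states S. (\<Sum>a\<in>states S. M a c) = Q b c)"
  proof
    fix b assume b: "b \<in> states S"
    show "\<exists>M::nat\<Rightarrow>nat\<Rightarrow>int. (\<forall>a c. M a c \<ge> 0) \<and> (\<forall>a\<in>states S. (\<Sum>c\<in>states S. M a c) = P a b)
           \<and> (\<forall>c\<in>states S. (\<Sum>a\<in>states S. M a c) = Q b c)"
      using transport[of "states S" "states S" "\<lambda>a. P a b" "\<lambda>c. Q b c"] assms b by simp
  qed
  then obtain MM where MM: "\<forall>b\<in>states S. (\<forall>a c. MM b a c \<ge> (0::int)) \<and> (\<forall>a\<in>states S. (\<Sum>c\<in>states S. MM b a c) = P a b)
           \<and> (\<forall>c\<in>states S. (\<Sum>a\<in>states S. MM b a c) = Q b c)"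
    by metis
  define x0 where "x0 = (\<lambda>v. if v \<in> paths S then MM (fst (snd v)) (fst v) (snd (snd v)) else 0)"
  have "is_table S x0" unfolding is_table_def x0_def using MM by (auto simp: paths_def)
  moreover have "\<forall>a\<in>states S. \<forall>b\<in>states S. PP S x0 a b = P a b"
    using MM unfolding PP_def x0_def by (simp add: mem_paths)
  moreover have "\<forall>b\<in>states S. \<forall>c\<in>states S. QQ S x0 b c = Q b c"
    using MM unfolding QQ_def x0_def by (simp add: mem_paths)
  ultimately show ?thesis by blast
qed




lemma neg_pos:
  fixes f :: "'a \<Rightarrow> int"
  assumes "finite A" "sum f A = 0" "a \<in> A" "f a < 0" shows "\<exists>b\<in>A. f b > 0"
  using ex_less[of A "\<lambda>_. 0" f a] assms by auto

lemma pos_neg: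
  fixes f :: "'a \<Rightarrow> int"
  assumes "finite A" "sum f A = 0" "a \<in> A" "f a > 0" shows "\<exists>b\<in>A. f b < 0"
  using ex_less[of A f "\<lambda>_. 0" a] assms by auto

lemma cycle:
  fixes D :: "nat \<Rightarrow> nat \<Rightarrow> int"
  assumes fin: "finite X" and rows: "\<forall>a\<in>X. (\<Sum>b\<in>X. D a b) = 0"
    and cols: "\<forall>b\<in>X. (\<Sum>a\<in>X. D a b) = 0" and a0: "a0 \<in> X" "b0 \<in> X" "D a0 b0 \<noteq> 0"
  shows "\<exists>m i j. 2 \<le> m \<and> inj_on i {1..m} \<and> inj_on j {1..m} \<and> i ` {1..m} \<subseteq> X \<and> j ` {1..m} \<subseteq> X
     \<and> (\<forall>l\<in>{1..m}. D (i l) (j l) > 0 \<and> D (i (nxt m l)) (j l) < 0)"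
proof -
  define R where "R = {a\<in>X. \<exists>b\<in>X. D a b > 0}"
  define colf where "colf a = (SOME b. b \<in> X \<and> D a b > 0)" for a
  define rowf where "rowf b = (SOME a. a \<in> X \<and> D a b < 0)" for b
  define F where "F a = rowf (colf a)" for a
  have colf: "colf a \<in> X \<and> D a (colf a) > 0" if "a \<in> R" for a
    using that unfolding R_def colf_def by (metis (mono_tags, lifting) mem_Collect_eq someI_ex)
  have rowf: "rowf b \<in> X \<and> D (rowf b) b < 0" if "b \<in> X" "a \<in> X" "D a b > 0" for a b
  proof -
    have "\<exists>a'\<in>X. D a' b < 0" using pos_neg[of X "\<lambda>a. D a b" a] fin cols that by auto
    then show ?thesis unfolding rowf_def by (metis (mono_tags, lifting) someI_ex)
  qed
  have FR: "F a \<in> R \<and> D (F a) (colf a) < 0" if "a \<in> R" for a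
  proof -
    have "a \<in> X" using that R_def by auto
    then have 1: "F a \<in> X \<and> D (F a) (colf a) < 0" using rowf colf that unfolding F_def by blast
    then have "\<exists>b\<in>X. D (F a) b > 0" using neg_pos[of X "\<lambda>b. D (F a) b" "colf a"] fin rows colf that by auto
    then show ?thesis using 1 unfolding R_def by auto
  qed
  obtain r0 where r0: "r0 \<in> R"
  proof (cases "D a0 b0 > 0")
    case True then show ?thesis using that a0 unfolding R_def by auto
  next
    case False
    then have "D a0 b0 < 0" using a0 by auto
    then obtain a' where "a' \<in> X" "D a' b0 > 0" using neg_pos[of X "\<lambda>a. D a b0" a0] fin cols a0 by auto
    then show ?thesis using that a0 unfolding R_def by auto
  qed
  define f where "f n = (F ^^ n) r0" for n
  have fS: "f (Suc n) = F (f n)" for n by (simp add: f_def)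
  have fR: "f n \<in> R" for n
    by (induction n) (auto simp: fS FR r0, simp add: f_def r0)
  have RX: "R \<subseteq> X" unfolding R_def by auto
  have "\<not> inj_on f {..card X}"
  proof
    assume "inj_on f {..card X}"
    moreover have "f ` {..card X} \<subseteq> X" using fR RX by auto
    ultimately have "card {..card X} \<le> card X" using card_inj_on_le fin by blast
    then show False by simp
  qed
  then obtain p0 q0 where pq: "p0 \<noteq> q0" "f p0 = f q0" unfolding inj_on_def by blast
  define G where "G = {d. 0 < d \<and> (\<exists>p. f p = f (p + d))}"
  have "\<exists>d. d \<in> G"
  proof (cases "p0 < q0")
    case True
    have "q0 - p0 \<in> G" unfolding G_def
    proof (intro CollectI conjI exI[of _ p0])
      show "0 < q0 - p0" using True by simp
      show "f p0 = f (p0 + (q0 - p0))" using True pq by simp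
    qed
    then show ?thesis by blast
  next
    case False
    have "p0 - q0 \<in> G" unfolding G_def
    proof (intro CollectI conjI exI[of _ q0])
      show "0 < p0 - q0" using False pq by simp
      show "f q0 = f (q0 + (p0 - q0))" using False pq by simp
    qed
    then show ?thesis by blast
  qed
  define m where "m = (LEAST d. d \<in> G)"
  have mG: "m \<in> G" unfolding m_def using \<open>\<exists>d. d \<in> G\<close> by (metis LeastI)
  have mmin: "f p' \<noteq> f (p' + d)" if "0 < d" "d < m" for p' d
  proof
    assume "f p' = f (p' + d)"
    then have "d \<in> G" using that unfolding G_def by auto
    then show False using that not_less_Least unfolding m_def by blast
  qed
  obtain p where p: "f p = f (p + m)" and m0: "0 < m" using mG unfolding G_def by auto
  have "m \<noteq> 1"
  proof
    assume "m = 1"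
    then have "f p = F (f p)" using p fS by simp
    then show False using FR[OF fR[of p]] colf[OF fR[of p]] by simp
  qed
  then have m2: "2 \<le> m" using m0 by simp
  define i where "i l = f (p + l - 1)" for l
  define j where "j l = colf (f (p + l - 1))" for l
  have dist: "f (p + l1 - 1) \<noteq> f (p + l2 - 1)" if "1 \<le> l1" "l1 < l2" "l2 \<le> m" for l1 l2
    using mmin[of "l2 - l1" "p + l1 - 1"] that by (simp add: algebra_simps)
  have inji: "inj_on i {1..m}"
  proof (rule inj_onI)
    fix l1 l2 assume l: "l1 \<in> {1..m}" "l2 \<in> {1..m}" "i l1 = i l2"
    show "l1 = l2"
    proof (rule ccontr)
      assume "l1 \<noteq> l2"
      then consider "l1 < l2" | "l2 < l1" by linarith
      then show False
      proof cases
        case 1 then show False using dist[of l1 l2] l unfolding i_def by auto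
      next
        case 2 then show False using dist[of l2 l1] l unfolding i_def by auto
      qed
    qed
  qed
  have distj: "j l1 \<noteq> j l2" if "1 \<le> l1" "l1 < l2" "l2 \<le> m" for l1 l2
  proof
    assume "j l1 = j l2"
    then have "F (f (p + l1 - 1)) = F (f (p + l2 - 1))" unfolding j_def F_def by simp
    moreover have "p + l1 = Suc (p + l1 - 1)" "p + l2 = Suc (p + l2 - 1)" using that by auto
    ultimately have e: "f (p + l1) = f (p + l2)" by (metis fS)
    show False
    proof (cases "l2 = m")
      case True
      then have "f p = f (p + l1)" using e p by simp
      then show False using mmin[of l1 p] that True by simp
    next
      case False
      then show False using dist[of "l1+1" "l2+1"] e that by simp
    qed
  qed
  have injj: "inj_on j {1..m}"
  proof (rule inj_onI)
    fix l1 l2 assume l: "l1 \<in> {1..m}" "l2 \<in> {1..m}" "j l1 = j l2"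
    show "l1 = l2"
    proof (rule ccontr)
      assume "l1 \<noteq> l2"
      then consider "l1 < l2" | "l2 < l1" by linarith
      then show False
      proof cases
        case 1 then show False using distj[of l1 l2] l by auto
      next
        case 2 then show False using distj[of l2 l1] l by auto
      qed
    qed
  qed
  have iX: "i ` {1..m} \<subseteq> X" using fR RX unfolding i_def by auto
  have jX: "j ` {1..m} \<subseteq> X" using fR colf unfolding j_def by auto
  have props: "D (i l) (j l) > 0 \<and> D (i (nxt m l)) (j l) < 0" if "l \<in> {1..m}" for l
  proof
    show "D (i l) (j l) > 0" unfolding i_def j_def using colf fR by blast
    show "D (i (nxt m l)) (j l) < 0"
    proof (cases "l = m")
      case True
      have "i (nxt m l) = f p" unfolding i_def nxt_def using True by simp
      also have "\<dots> = f (Suc (p + l - 1))" using p True m0 by simp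
      also have "\<dots> = F (f (p + l - 1))" by (simp add: fS)
      finally show ?thesis unfolding j_def using FR fR by simp
    next
      case False
      have "i (nxt m l) = f (p + l)" unfolding i_def nxt_def using False by simp
      also have "\<dots> = f (Suc (p + l - 1))" using that by simp
      also have "\<dots> = F (f (p + l - 1))" by (simp add: fS)
      finally show ?thesis unfolding j_def using FR fR by simp
    qed
  qed
  show ?thesis using m2 inji injj iX jX props by blast
qed




definition F1 :: "nat \<Rightarrow> (nat \<Rightarrow> nat) \<Rightarrow> (nat \<Rightarrow> nat) \<Rightarrow> (nat \<Rightarrow> nat) \<Rightarrow> nat \<Rightarrow> nat" where
  "F1 m i j s b = (if b \<in> j ` {1..m} then i (the_inv_into {1..m} j b) else s b)"
definition G1 :: "nat \<Rightarrow> (nat \<Rightarrow> nat) \<Rightarrow> (nat \<Rightarrow> nat) \<Rightarrow> (nat \<Rightarrow> nat) \<Rightarrow> nat \<Rightarrow> nat" where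
  "G1 m i j t b = (if b \<in> i ` {1..m} then j (prv m (the_inv_into {1..m} i b)) else t b)"
definition F2 :: "nat \<Rightarrow> (nat \<Rightarrow> nat) \<Rightarrow> (nat \<Rightarrow> nat) \<Rightarrow> (nat \<Rightarrow> nat) \<Rightarrow> nat \<Rightarrow> nat" where
  "F2 m i j s b = (if b \<in> j ` {1..m} then i (nxt m (the_inv_into {1..m} j b)) else s b)"
definition G2 :: "nat \<Rightarrow> (nat \<Rightarrow> nat) \<Rightarrow> (nat \<Rightarrow> nat) \<Rightarrow> (nat \<Rightarrow> nat) \<Rightarrow> nat \<Rightarrow> nat" where
  "G2 m i j t b = (if b \<in> i ` {1..m} then j (the_inv_into {1..m} i b) else t b)"

definition indW :: "nat set \<Rightarrow> (nat \<Rightarrow> nat) \<Rightarrow> (nat \<Rightarrow> nat) \<Rightarrow> table" where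
  "indW K F G = (\<lambda>v. if fst (snd v) \<in> K \<and> fst v = F (fst (snd v)) \<and> snd (snd v) = G (fst (snd v)) then 1 else 0)"

lemma W1_char: "v \<in> W1 m i j s t \<longleftrightarrow> fst (snd v) \<in> i ` {1..m} \<union> j ` {1..m} \<and>
   fst v = F1 m i j s (fst (snd v)) \<and> snd (snd v) = G1 m i j t (fst (snd v))"
proof -
  obtain a b c where v: "v = (a,b,c)" by (cases v) auto
  show ?thesis unfolding v W1_def Let_def F1_def G1_def by (auto simp: image_iff)
qed

lemma W2_char: "v \<in> W2 m i j s t \<longleftrightarrow> fst (snd v) \<in> i ` {1..m} \<union> j ` {1..m} \<and>
   fst v = F2 m i j s (fst (snd v)) \<and> snd (snd v) = G2 m i j t (fst (snd v))"
proof -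
  obtain a b c where v: "v = (a,b,c)" by (cases v) auto
  show ?thesis unfolding v W2_def Let_def F2_def G2_def by (auto simp: image_iff)
qed

lemma finite_W1: "finite (W1 m i j s t)" by (simp add: W1_def Let_def)
lemma finite_W2: "finite (W2 m i j s t)" by (simp add: W2_def Let_def)

lemma sum_unit: "finite W \<Longrightarrow> (\<Sum>w\<in>W. e w v) = (if v \<in> W then 1 else 0)"
  by (simp add: unit_table_def)

lemma zbar_eq: "zbar m i j s t = (\<lambda>v. indW (i ` {1..m} \<union> j ` {1..m}) (F1 m i j s) (G1 m i j t) v
   - indW (i ` {1..m} \<union> j ` {1..m}) (F2 m i j s) (G2 m i j t) v)"
  unfolding zbar_def sum_unit[OF finite_W1] sum_unit[OF finite_W2] indW_def W1_char W2_char
  by simp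

lemma PP_indW: "PP S (indW K F G) a b = (if b \<in> K \<and> a = F b \<and> G b \<in> states S then 1 else 0)"
  unfolding PP_def indW_def by (auto simp: sum_if_const intro!: sum.neutral)

lemma QQ_indW: "QQ S (indW K F G) b c = (if b \<in> K \<and> c = G b \<and> F b \<in> states S then 1 else 0)"
  unfolding QQ_def indW_def by (auto simp: sum_if_const intro!: sum.neutral)

lemma indW_paths: "K \<subseteq> states S \<Longrightarrow> F ` K \<subseteq> states S \<Longrightarrow> G ` K \<subseteq> states S \<Longrightarrow>
   w \<notin> paths S \<Longrightarrow> indW K F G w = 0"
  unfolding indW_def paths_def by (cases w) auto

lemma nxt_in: "l \<in> {1..m} \<Longrightarrow> nxt m l \<in> {1..m}" by (auto simp: nxt_def)
lemma prv_in: "l \<in> {1..m} \<Longrightarrow> prv m l \<in> {1..m}" unfolding prv_def by auto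
lemma prv_nxt: "l \<in> {1..m} \<Longrightarrow> prv m (nxt m l) = l" by (auto simp: prv_def nxt_def)
lemma nxt_prv: "l \<in> {1..m} \<Longrightarrow> nxt m (prv m l) = l" by (auto simp: prv_def nxt_def)
lemma nxt_inj: "inj_on (nxt m) {1..m}"
  by (rule inj_onI) (metis prv_nxt)
lemma nxt_img: "nxt m ` {1..m} = {1..m}"
proof
  show "nxt m ` {1..m} \<subseteq> {1..m}" using nxt_in by auto
  show "{1..m} \<subseteq> nxt m ` {1..m}"
  proof
    fix l assume "l \<in> {1..m}"
    then have "l = nxt m (prv m l)" "prv m l \<in> {1..m}" by (simp add: nxt_prv, rule prv_in)
    then show "l \<in> nxt m ` {1..m}" by blast
  qed
qed


context
  fixes S m :: nat and i j s t :: "nat \<Rightarrow> nat"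
  assumes m1: "1 \<le> m" and ii: "inj_on i {1..m}" and jj: "inj_on j {1..m}"
    and iS: "i ` {1..m} \<subseteq> states S" and jS: "j ` {1..m} \<subseteq> states S"
    and sS: "s ` (i ` {1..m} - j ` {1..m}) \<subseteq> states S"
    and tS: "t ` (j ` {1..m} - i ` {1..m}) \<subseteq> states S"
begin

lemma F1_j: "l \<in> {1..m} \<Longrightarrow> F1 m i j s (j l) = i l"
  unfolding F1_def using jj by (simp add: the_inv_into_f_f)
lemma F2_j: "l \<in> {1..m} \<Longrightarrow> F2 m i j s (j l) = i (nxt m l)"
  unfolding F2_def using jj by (simp add: the_inv_into_f_f)
lemma G1_i: "l \<in> {1..m} \<Longrightarrow> G1 m i j t (i l) = j (prv m l)"
  unfolding G1_def using ii by (simp add: the_inv_into_f_f)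
lemma G2_i: "l \<in> {1..m} \<Longrightarrow> G2 m i j t (i l) = j l"
  unfolding G2_def using ii by (simp add: the_inv_into_f_f)
lemma F_nJ: "b \<notin> j ` {1..m} \<Longrightarrow> F1 m i j s b = s b \<and> F2 m i j s b = s b"
  unfolding F1_def F2_def by simp
lemma G_nI: "b \<notin> i ` {1..m} \<Longrightarrow> G1 m i j t b = t b \<and> G2 m i j t b = t b"
  unfolding G1_def G2_def by simp

lemma K_st: "i ` {1..m} \<union> j ` {1..m} \<subseteq> states S" using iS jS by auto

lemma F1_st: "b \<in> i ` {1..m} \<union> j ` {1..m} \<Longrightarrow> F1 m i j s b \<in> states S"
  by (cases "b \<in> j ` {1..m}") (use F1_j iS sS F_nJ in auto)
lemma F2_st: "b \<in> i ` {1..m} \<union> j ` {1..m} \<Longrightarrow> F2 m i j s b \<in> states S"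
  by (cases "b \<in> j ` {1..m}") (use F2_j iS sS F_nJ nxt_in in auto)
lemma G1_st: "b \<in> i ` {1..m} \<union> j ` {1..m} \<Longrightarrow> G1 m i j t b \<in> states S"
  by (cases "b \<in> i ` {1..m}") (use G1_i jS tS G_nI prv_in in auto)
lemma G2_st: "b \<in> i ` {1..m} \<union> j ` {1..m} \<Longrightarrow> G2 m i j t b \<in> states S"
  by (cases "b \<in> i ` {1..m}") (use G2_i jS tS G_nI in auto)

lemma Pdiff: "(if b \<in> i ` {1..m} \<union> j ` {1..m} \<and> a = F1 m i j s b then 1 else 0)
   - (if b \<in> i ` {1..m} \<union> j ` {1..m} \<and> a = F2 m i j s b then 1 else 0)
  = (if \<exists>l\<in>{1..m}. a = i l \<and> b = j l then 1 else 0)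
   - (if \<exists>l\<in>{1..m}. a = i (nxt m l) \<and> b = j l then 1 else (0::int))"
proof (cases "b \<in> j ` {1..m}")
  case True
  then obtain l where l: "l \<in> {1..m}" "b = j l" by auto
  have e1: "(\<exists>l'\<in>{1..m}. a = i l' \<and> b = j l') \<longleftrightarrow> a = i l"
    using l jj by (auto simp: inj_on_eq_iff)
  have e2: "(\<exists>l'\<in>{1..m}. a = i (nxt m l') \<and> b = j l') \<longleftrightarrow> a = i (nxt m l)"
    using l jj by (auto simp: inj_on_eq_iff)
  show ?thesis unfolding e1 e2 using l F1_j F2_j True by simp
next
  case False
  then have "\<not> (\<exists>l\<in>{1..m}. a = i l \<and> b = j l)" "\<not> (\<exists>l\<in>{1..m}. a = i (nxt m l) \<and> b = j l)" by auto
  then show ?thesis using F_nJ[OF False] by simp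
qed

lemma Qdiff: "(if a \<in> i ` {1..m} \<union> j ` {1..m} \<and> b = G1 m i j t a then 1 else 0)
   - (if a \<in> i ` {1..m} \<union> j ` {1..m} \<and> b = G2 m i j t a then 1 else 0)
  = (if \<exists>l\<in>{1..m}. a = i (nxt m l) \<and> b = j l then 1 else 0)
   - (if \<exists>l\<in>{1..m}. a = i l \<and> b = j l then 1 else (0::int))"
proof (cases "a \<in> i ` {1..m}")
  case True
  then obtain l where l: "l \<in> {1..m}" "a = i l" by auto
  have e1: "(\<exists>l'\<in>{1..m}. a = i l' \<and> b = j l') \<longleftrightarrow> b = j l"
    using l ii by (auto simp: inj_on_eq_iff)
  have e2: "(\<exists>l'\<in>{1..m}. a = i (nxt m l') \<and> b = j l') \<longleftrightarrow> b = j (prv m l)"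
  proof
    assume "\<exists>l'\<in>{1..m}. a = i (nxt m l') \<and> b = j l'"
    then obtain l' where l': "l' \<in> {1..m}" "a = i (nxt m l')" "b = j l'" by blast
    then have "nxt m l' = l" using l ii nxt_in by (auto simp: inj_on_eq_iff)
    then have "l' = prv m l" using prv_nxt l' by metis
    then show "b = j (prv m l)" using l' by simp
  next
    assume "b = j (prv m l)"
    then show "\<exists>l'\<in>{1..m}. a = i (nxt m l') \<and> b = j l'"
      using l prv_in nxt_prv by metis
  qed
  show ?thesis unfolding e1 e2 using l G1_i G2_i True by simp
next
  case False
  then have "\<not> (\<exists>l\<in>{1..m}. a = i l \<and> b = j l)" "\<not> (\<exists>l\<in>{1..m}. a = i (nxt m l) \<and> b = j l)"
    using nxt_in by auto
  then show ?thesis using G_nI[OF False] by simp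
qed

lemma PP_zbar: "PP S (zbar m i j s t) a b = (if \<exists>l\<in>{1..m}. a = i l \<and> b = j l then 1 else 0)
   - (if \<exists>l\<in>{1..m}. a = i (nxt m l) \<and> b = j l then 1 else (0::int))"
proof -
  have "PP S (zbar m i j s t) a b = (if b \<in> i ` {1..m} \<union> j ` {1..m} \<and> a = F1 m i j s b then 1 else 0)
   - (if b \<in> i ` {1..m} \<union> j ` {1..m} \<and> a = F2 m i j s b then 1 else 0)"
    unfolding zbar_eq PP_diff PP_indW using G1_st G2_st by auto
  then show ?thesis using Pdiff by simp
qed

lemma QQ_zbar: "QQ S (zbar m i j s t) a b = (if \<exists>l\<in>{1..m}. a = i (nxt m l) \<and> b = j l then 1 else 0)
   - (if \<exists>l\<in>{1..m}. a = i l \<and> b = j l then 1 else (0::int))"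
proof -
  have "QQ S (zbar m i j s t) a b = (if a \<in> i ` {1..m} \<union> j ` {1..m} \<and> b = G1 m i j t a then 1 else 0)
   - (if a \<in> i ` {1..m} \<union> j ` {1..m} \<and> b = G2 m i j t a then 1 else 0)"
    unfolding zbar_eq QQ_diff QQ_indW using F1_st F2_st by auto
  then show ?thesis using Qdiff by simp
qed

lemma sum_reidx: "(\<Sum>b\<in>states S. (if \<exists>l\<in>{1..m}. a = g l \<and> b = j l then 1 else (0::int)))
   = (\<Sum>l\<in>{1..m}. if a = g l then 1 else 0)"
proof -
  have "(\<Sum>b\<in>states S. (if \<exists>l\<in>{1..m}. a = g l \<and> b = j l then 1 else (0::int)))
     = (\<Sum>b\<in>j ` {1..m}. (if \<exists>l\<in>{1..m}. a = g l \<and> b = j l then 1 else (0::int)))"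
    using jS by (intro sum.mono_neutral_right) auto
  also have "\<dots> = (\<Sum>l\<in>{1..m}. (if \<exists>l'\<in>{1..m}. a = g l' \<and> j l = j l' then 1 else (0::int)))"
    using jj by (simp add: sum.reindex)
  also have "\<dots> = (\<Sum>l\<in>{1..m}. if a = g l then 1 else 0)"
    using jj by (intro sum.cong refl) (auto simp: inj_on_eq_iff)
  finally show ?thesis .
qed

lemma zbar_rows: "(\<Sum>b\<in>states S. PP S (zbar m i j s t) a b) = 0"
proof -
  have "(\<Sum>l\<in>{1..m}. if a = i (nxt m l) then 1 else (0::int)) = (\<Sum>l\<in>nxt m ` {1..m}. if a = i l then 1 else 0)"
    using nxt_inj by (simp add: sum.reindex)
  then show ?thesis unfolding PP_zbar sum_subtractf sum_reidx nxt_img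
    using sum_reidx[of "\<lambda>l. i (nxt m l)"] by simp
qed

lemma zbar_move: "is_move S (zbar m i j s t)"
proof (rule is_move_intro)
  show "\<forall>w. w \<notin> paths S \<longrightarrow> zbar m i j s t w = 0"
    unfolding zbar_eq using indW_paths K_st F1_st F2_st G1_st G2_st by (simp add: image_subset_iff)
  show "\<forall>a\<in>states S. (\<Sum>b\<in>states S. PP S (zbar m i j s t) a b) = 0" using zbar_rows by simp
  show "\<forall>a\<in>states S. \<forall>b\<in>states S. PP S (zbar m i j s t) a b + QQ S (zbar m i j s t) a b = 0"
    unfolding PP_zbar QQ_zbar by simp
qed

end




lemma all_moves: "z \<in> BB S \<Longrightarrow> is_move S z"
proof -
  assume "z \<in> BB S"
  then consider "z \<in> crossing_swaps S" | "z \<in> zbar_moves S" by blast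
  then show ?thesis
  proof cases
    case 1 then show ?thesis by (rule cs_move)
  next
    case 2
    then have "\<exists>m i j s t. z = zbar m i j s t \<and> 2 \<le> m \<and> m \<le> S \<and>
      inj_on i {1..m} \<and> i ` {1..m} \<subseteq> states S \<and> inj_on j {1..m} \<and> j ` {1..m} \<subseteq> states S \<and>
      s ` (i ` {1..m} - j ` {1..m}) \<subseteq> states S \<and> t ` (j ` {1..m} - i ` {1..m}) \<subseteq> states S"
      unfolding zbar_moves_def by (simp only: mem_Collect_eq)
    then obtain m i j s t where z: "z = zbar m i j s t" and c: "2 \<le> m" "m \<le> S"
      "inj_on i {1..m}" "i ` {1..m} \<subseteq> states S" "inj_on j {1..m}" "j ` {1..m} \<subseteq> states S"
      "s ` (i ` {1..m} - j ` {1..m}) \<subseteq> states S" "t ` (j ` {1..m} - i ` {1..m}) \<subseteq> states S"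
      by (elim exE conjE) blast
    have "1 \<le> m" using c by simp
    show ?thesis unfolding z by (rule zbar_move[OF \<open>1 \<le> m\<close> c(3) c(5) c(4) c(6) c(7) c(8)])
  qed
qed

lemma sum_ge1:
  fixes f :: "'a \<Rightarrow> int"
  assumes "finite A" "\<forall>a\<in>A. f a \<ge> 0" "c \<in> A" "f c \<ge> 1" shows "sum f A \<ge> 1"
proof -
  have "f c \<le> sum f A" using assms by (intro member_le_sum) auto
  then show ?thesis using assms by simp
qed

lemma ex_ge1:
  fixes f :: "'a \<Rightarrow> int"
  assumes "sum f A \<ge> 1" shows "\<exists>a\<in>A. f a \<ge> 1"
proof (rule ccontr)
  assume "\<not> ?thesis" then have "\<forall>a\<in>A. f a \<le> 0" by auto
  then have "sum f A \<le> 0" by (simp add: sum_nonpos)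
  then show False using assms by simp
qed

lemma sum_ind1: "F \<in> A \<Longrightarrow> finite A \<Longrightarrow> (\<Sum>a\<in>A. if P \<and> a = F then 1 else 0) = (if P then 1 else (0::int))"
  by (cases P) auto


lemma mainconn:
  assumes "is_table S x" "is_table S y"
    "\<forall>a\<in>states S. (\<Sum>b\<in>states S. PP S x a b) = (\<Sum>b\<in>states S. PP S y a b)"
    "\<forall>a\<in>states S. \<forall>b\<in>states S. PP S x a b + QQ S x a b = PP S y a b + QQ S y a b"
  shows "conn (BB S) x y"
  using assms
proof (induction "nat (\<Sum>p\<in>states S \<times> states S. \<bar>PP S x (fst p) (snd p) - PP S y (fst p) (snd p)\<bar>)"
    arbitrary: x rule: less_induct)
  case less
  note tx = less.prems(1) and ty = less.prems(2) and E1 = less.prems(3) and E2 = less.prems(4)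
  let ?st = "states S"
  define D where "D a b = PP S x a b - PP S y a b" for a b
  show ?case
  proof (cases "\<forall>a\<in>?st. \<forall>b\<in>?st. D a b = 0")
    case True
    then have P: "\<forall>a\<in>?st. \<forall>b\<in>?st. PP S x a b = PP S y a b" unfolding D_def by simp
    have Q: "\<forall>a\<in>?st. \<forall>b\<in>?st. QQ S x a b = QQ S y a b"
    proof (intro ballI)
      fix a b assume "a \<in> ?st" "b \<in> ?st"
      then show "QQ S x a b = QQ S y a b" using E2 P by simp
    qed
    show ?thesis by (rule lemA[OF tx ty P Q])
  next
    case False
    then obtain a0 b0 where ab0: "a0 \<in> ?st" "b0 \<in> ?st" "D a0 b0 \<noteq> 0" by blast
    have rows: "\<forall>a\<in>?st. (\<Sum>b\<in>?st. D a b) = 0" using E1 unfolding D_def by (simp add: sum_subtractf)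
    have cols: "\<forall>b\<in>?st. (\<Sum>a\<in>?st. D a b) = 0"
    proof
      fix b assume b: "b \<in> ?st"
      have "(\<Sum>a\<in>?st. D a b) = (\<Sum>c\<in>?st. QQ S x b c) - (\<Sum>c\<in>?st. QQ S y b c)"
        unfolding D_def sum_subtractf middle_eq ..
      also have "\<dots> = (\<Sum>c\<in>?st. QQ S x b c - QQ S y b c)" by (simp add: sum_subtractf)
      also have "\<dots> = (\<Sum>c\<in>?st. - D b c)"
      proof (rule sum.cong[OF refl])
        fix c assume "c \<in> ?st"
        then have "PP S x b c + QQ S x b c = PP S y b c + QQ S y b c" using E2 b by blast
        then show "QQ S x b c - QQ S y b c = - D b c" unfolding D_def by simp
      qed
      also have "\<dots> = 0" using rows b by (simp add: sum_negf)
      finally show "(\<Sum>a\<in>?st. D a b) = 0" .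
    qed
    from cycle[OF finite_states rows cols ab0] obtain m i j where cyc0: "2 \<le> m \<and> inj_on i {1..m} \<and> inj_on j {1..m} \<and> i ` {1..m} \<subseteq> ?st
      \<and> j ` {1..m} \<subseteq> ?st \<and> (\<forall>l\<in>{1..m}. D (i l) (j l) > 0 \<and> D (i (nxt m l)) (j l) < 0)"
      by (elim exE)
    then have cyc: "2 \<le> m" "inj_on i {1..m}" "inj_on j {1..m}" "i ` {1..m} \<subseteq> ?st"
      "j ` {1..m} \<subseteq> ?st" "\<forall>l\<in>{1..m}. D (i l) (j l) > 0 \<and> D (i (nxt m l)) (j l) < 0"
      by blast+
    let ?L = "{1..m}"
    let ?I = "i ` ?L" and ?J = "j ` ?L"
    let ?K = "i ` ?L \<union> j ` ?L"
    have m1: "1 \<le> m" using cyc(1) by simp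
    have x0: "\<forall>w. x w \<ge> 0" and y0: "\<forall>w. y w \<ge> 0" using tx ty by (auto simp: is_table_def)
    have Px1: "PP S x (i l) (j l) \<ge> 1" if "l \<in> ?L" for l
      using cyc(6) that PP_nonneg[OF ty, of "i l" "j l"] unfolding D_def by force
    have Qx1: "QQ S x (i (nxt m l)) (j l) \<ge> 1" if "l \<in> ?L" for l
    proof -
      have "i (nxt m l) \<in> ?st" "j l \<in> ?st" using cyc(4,5) that nxt_in by auto
      then have "PP S x (i (nxt m l)) (j l) + QQ S x (i (nxt m l)) (j l) = PP S y (i (nxt m l)) (j l) + QQ S y (i (nxt m l)) (j l)"
        using E2 by blast
      moreover have "D (i (nxt m l)) (j l) < 0" using cyc(6) that by blast
      moreover have "QQ S y (i (nxt m l)) (j l) \<ge> 0" by (rule QQ_nonneg[OF ty])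
      ultimately show ?thesis unfolding D_def by linarith
    qed
    have QxI: "QQ S x (i l) (j (prv m l)) \<ge> 1" if "l \<in> ?L" for l
      using Qx1[of "prv m l"] prv_in[OF that] nxt_prv[OF that] by simp
    have midx: "(\<Sum>a\<in>?st. PP S x a b) \<ge> 1" if bK: "b \<in> ?K" for b
    proof (cases "b \<in> ?J")
      case True
      then obtain l where l: "l \<in> ?L" "b = j l" by blast
      show ?thesis unfolding l(2)
        by (rule sum_ge1[of _ _ "i l"]) (use PP_nonneg[OF tx] Px1 l cyc(4) in auto)
    next
      case False
      then obtain l where l: "l \<in> ?L" "b = i l" using bK by blast
      have "(\<Sum>c\<in>?st. QQ S x b c) \<ge> 1" unfolding l(2)
        by (rule sum_ge1[of _ _ "j (prv m l)"]) (use QQ_nonneg[OF tx] QxI l cyc(5) prv_in in auto)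
      then show ?thesis using middle_eq[of S x b] by simp
    qed
    define s where "s b = (SOME a. a \<in> ?st \<and> PP S x a b \<ge> 1)" for b
    define t where "t b = (SOME c. c \<in> ?st \<and> QQ S x b c \<ge> 1)" for b
    have s_ok: "s b \<in> ?st \<and> PP S x (s b) b \<ge> 1" if "b \<in> ?K" for b
    proof -
      have "\<exists>a\<in>?st. PP S x a b \<ge> 1" using ex_ge1 midx[OF that] by blast
      then show ?thesis unfolding s_def by (metis (mono_tags, lifting) someI_ex)
    qed
    have t_ok: "t b \<in> ?st \<and> QQ S x b (t b) \<ge> 1" if "b \<in> ?K" for b
    proof -
      have "\<exists>c\<in>?st. QQ S x b c \<ge> 1" using ex_ge1[of "\<lambda>c. QQ S x b c"] midx[OF that] middle_eq[of S x b] by simp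
      then show ?thesis unfolding t_def by (metis (mono_tags, lifting) someI_ex)
    qed
    have sS: "s ` (?I - ?J) \<subseteq> ?st" using s_ok by blast
    have tS: "t ` (?J - ?I) \<subseteq> ?st" using t_ok by blast
    note zc = m1 cyc(2) cyc(3) cyc(4) cyc(5) sS tS
    have mS: "m \<le> S"
    proof -
      have "card ?L \<le> card ?st" using card_inj_on_le[OF cyc(2) cyc(4)] by simp
      then show ?thesis by (simp add: states_def)
    qed
    define z where "z = zbar m i j s t"
    have zB: "z \<in> BB S" unfolding z_def zbar_moves_def using cyc(1) mS cyc(2-5) sS tS by blast
    define P' where "P' a b = PP S x a b - (if b \<in> ?K \<and> a = F1 m i j s b then 1 else 0)" for a b
    define Q' where "Q' b c = QQ S x b c - (if b \<in> ?K \<and> c = G1 m i j t b then 1 else 0)" for b c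
    have P'0: "\<forall>a\<in>?st. \<forall>b\<in>?st. P' a b \<ge> 0"
    proof (intro ballI)
      fix a b assume "a \<in> ?st" "b \<in> ?st"
      show "P' a b \<ge> 0"
      proof (cases "b \<in> ?K \<and> a = F1 m i j s b")
        case True
        show ?thesis
        proof (cases "b \<in> ?J")
          case bJ: True
          then obtain l where l: "l \<in> ?L" "b = j l" by blast
          then have "a = i l" using True F1_j[OF zc] by simp
          then show ?thesis unfolding P'_def using Px1[OF l(1)] l True by simp
        next
          case False
          then have "a = s b" using True F_nJ[OF zc] by simp
          then show ?thesis unfolding P'_def using s_ok[OF conjunct1[OF True]] True by simp
        qed
      next
        case False then show ?thesis unfolding P'_def if_not_P[OF False] using PP_nonneg[OF tx, of a b] by simp
      qed
    qed
    have Q'0: "\<forall>b\<in>?st. \<forall>c\<in>?st. Q' b c \<ge> 0"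
    proof (intro ballI)
      fix b c assume "b \<in> ?st" "c \<in> ?st"
      show "Q' b c \<ge> 0"
      proof (cases "b \<in> ?K \<and> c = G1 m i j t b")
        case True
        show ?thesis
        proof (cases "b \<in> ?I")
          case bI: True
          then obtain l where l: "l \<in> ?L" "b = i l" by blast
          then have "c = j (prv m l)" using True G1_i[OF zc] by simp
          then show ?thesis unfolding Q'_def using QxI[OF l(1)] l True by simp
        next
          case False
          then have "c = t b" using True G_nI[OF zc] by simp
          then show ?thesis unfolding Q'_def using t_ok[OF conjunct1[OF True]] True by simp
        qed
      next
        case False then show ?thesis unfolding Q'_def if_not_P[OF False] using QQ_nonneg[OF tx, of b c] by simp
      qed
    qed
    have mid': "\<forall>b\<in>?st. (\<Sum>a\<in>?st. P' a b) = (\<Sum>c\<in>?st. Q' b c)"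
    proof
      fix b assume b: "b \<in> ?st"
      have 1: "(\<Sum>a\<in>?st. P' a b) = (\<Sum>a\<in>?st. PP S x a b) - (if b \<in> ?K then 1 else 0)"
      proof (cases "b \<in> ?K")
        case True
        then show ?thesis unfolding P'_def sum_subtractf using sum_ind1[OF F1_st[OF zc True], of "b \<in> ?K"] by simp
      qed (simp add: P'_def)
      have 2: "(\<Sum>c\<in>?st. Q' b c) = (\<Sum>c\<in>?st. QQ S x b c) - (if b \<in> ?K then 1 else 0)"
      proof (cases "b \<in> ?K")
        case True
        then show ?thesis unfolding Q'_def sum_subtractf using sum_ind1[OF G1_st[OF zc True], of "b \<in> ?K"] by simp
      qed (simp add: Q'_def)
      show "(\<Sum>a\<in>?st. P' a b) = (\<Sum>c\<in>?st. Q' b c)" unfolding 1 2 middle_eq ..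
    qed
    obtain x0 where tx0: "is_table S x0" and Px0: "\<forall>a\<in>?st. \<forall>b\<in>?st. PP S x0 a b = P' a b"
      and Qx0: "\<forall>b\<in>?st. \<forall>c\<in>?st. QQ S x0 b c = Q' b c"
      using realize[OF P'0 Q'0 mid'] by blast
    define x2 where "x2 = (\<lambda>v. x0 v + indW ?K (F1 m i j s) (G1 m i j t) v)"
    have tx2: "is_table S x2"
      using tx0 indW_paths[OF K_st[OF zc] _ _] F1_st[OF zc] G1_st[OF zc]
      unfolding is_table_def x2_def indW_def by (auto simp: image_subset_iff)
    have Px2: "\<forall>a\<in>?st. \<forall>b\<in>?st. PP S x2 a b = PP S x a b"
      unfolding x2_def PP_add PP_indW using Px0 G1_st[OF zc] by (auto simp: P'_def)
    have Qx2: "\<forall>a\<in>?st. \<forall>b\<in>?st. QQ S x2 a b = QQ S x a b"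
      unfolding x2_def QQ_add QQ_indW using Qx0 F1_st[OF zc] by (auto simp: Q'_def)
    have c1: "conn (BB S) x x2" by (rule lemA[OF tx tx2]) (use Px2 Qx2 in simp_all)
    define x3 where "x3 = (\<lambda>v. x2 v - z v)"
    have x3e: "x3 v = x0 v + indW ?K (F2 m i j s) (G2 m i j t) v" for v
      unfolding x3_def x2_def z_def zbar_eq by simp
    have x30: "\<forall>v. x3 v \<ge> 0" using tx0 unfolding x3e is_table_def indW_def by simp
    have x20: "\<forall>v. x2 v \<ge> 0" using tx2 unfolding is_table_def by simp
    have c2: "conn (BB S) x2 x3" unfolding x3_def by (rule conn_step_neg[OF zB x20]) (use x30 x3_def in simp)
    have zmv: "is_move S z" unfolding z_def by (rule zbar_move[OF zc])
    have tx3: "is_table S x3" using tx2 x30 zmv unfolding is_table_def is_move_def x3_def by simp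
    have PPx3: "PP S x3 a b = PP S x2 a b - PP S z a b" for a b unfolding x3_def PP_diff ..
    have QQx3: "QQ S x3 a b = QQ S x2 a b - QQ S z a b" for a b unfolding x3_def QQ_diff ..
    have E1': "\<forall>a\<in>?st. (\<Sum>b\<in>?st. PP S x3 a b) = (\<Sum>b\<in>?st. PP S y a b)"
    proof
      fix a assume a: "a \<in> ?st"
      have "(\<Sum>b\<in>?st. PP S x3 a b) = (\<Sum>b\<in>?st. PP S x2 a b) - (\<Sum>b\<in>?st. PP S z a b)"
        unfolding PPx3 sum_subtractf ..
      also have "\<dots> = (\<Sum>b\<in>?st. PP S x a b)" unfolding z_def zbar_rows[OF zc] using Px2 a by simp
      finally show "(\<Sum>b\<in>?st. PP S x3 a b) = (\<Sum>b\<in>?st. PP S y a b)" using E1 a by simp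
    qed
    have E2': "\<forall>a\<in>?st. \<forall>b\<in>?st. PP S x3 a b + QQ S x3 a b = PP S y a b + QQ S y a b"
    proof (intro ballI)
      fix a b assume ab: "a \<in> ?st" "b \<in> ?st"
      have "PP S z a b + QQ S z a b = 0" unfolding z_def PP_zbar[OF zc] QQ_zbar[OF zc] by simp
      moreover have "PP S x a b + QQ S x a b = PP S y a b + QQ S y a b" using E2 ab by blast
      moreover have "PP S x2 a b = PP S x a b" "QQ S x2 a b = QQ S x a b" using Px2 Qx2 ab by blast+
      ultimately show "PP S x3 a b + QQ S x3 a b = PP S y a b + QQ S y a b"
        unfolding PPx3 QQx3 by linarith
    qed
    define C where "C a b = PP S z a b" for a b
    have nxtne: "nxt m l \<noteq> l" if "l \<in> ?L" for l using cyc(1) that by (auto simp: nxt_def)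
    have Cprop: "\<bar>D a b - C a b\<bar> = \<bar>D a b\<bar> - \<bar>C a b\<bar>" for a b
    proof -
      have CC: "C a b = (if \<exists>l\<in>?L. a = i l \<and> b = j l then 1 else 0)
         - (if \<exists>l\<in>?L. a = i (nxt m l) \<and> b = j l then 1 else 0)"
        unfolding C_def z_def PP_zbar[OF zc] ..
      show ?thesis
      proof (cases "\<exists>l\<in>?L. a = i l \<and> b = j l")
        case True
        then obtain l where l: "l \<in> ?L" "a = i l" "b = j l" by blast
        have "\<not> (\<exists>l'\<in>?L. a = i (nxt m l') \<and> b = j l')"
        proof
          assume "\<exists>l'\<in>?L. a = i (nxt m l') \<and> b = j l'"
          then obtain l' where l': "l' \<in> ?L" "a = i (nxt m l')" "b = j l'" by blast
          then have "l' = l" using l cyc(3) by (auto simp: inj_on_eq_iff)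
          then have "nxt m l = l" using l l' cyc(2) nxt_in by (auto simp: inj_on_eq_iff)
          then show False using nxtne l by blast
        qed
        moreover have "D a b > 0" using cyc(6) l by blast
        ultimately show ?thesis unfolding CC using True by simp
      next
        case False
        show ?thesis
        proof (cases "\<exists>l\<in>?L. a = i (nxt m l) \<and> b = j l")
          case True
          then obtain l where l: "l \<in> ?L" "a = i (nxt m l)" "b = j l" by blast
          have "D a b < 0" using cyc(6) l by blast
          then show ?thesis unfolding CC using True False by simp
        next
          case F2: False
          show ?thesis unfolding CC if_not_P[OF False] if_not_P[OF F2] by simp
        qed
      qed
    qed
    have C11: "\<bar>C (i 1) (j 1)\<bar> = 1"
    proof -
      have "1 \<in> ?L" using m1 by simp
      then have "C (i 1) (j 1) = 1" using Cprop[of "i 1" "j 1"] cyc(6)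
        unfolding C_def z_def PP_zbar[OF zc]
        by (smt (verit))
      then show ?thesis by simp
    qed
    have Dx3: "PP S x3 a b - PP S y a b = D a b - C a b" if "a \<in> ?st" "b \<in> ?st" for a b
      unfolding PPx3 C_def D_def using Px2 that by simp
    let ?SS = "?st \<times> ?st"
    have "(\<Sum>p\<in>?SS. \<bar>PP S x3 (fst p) (snd p) - PP S y (fst p) (snd p)\<bar>)
        = (\<Sum>p\<in>?SS. \<bar>D (fst p) (snd p)\<bar> - \<bar>C (fst p) (snd p)\<bar>)"
      by (intro sum.cong refl) (auto simp: Dx3 Cprop)
    also have "\<dots> = (\<Sum>p\<in>?SS. \<bar>D (fst p) (snd p)\<bar>) - (\<Sum>p\<in>?SS. \<bar>C (fst p) (snd p)\<bar>)"
      by (simp add: sum_subtractf)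
    finally have eq1: "(\<Sum>p\<in>?SS. \<bar>PP S x3 (fst p) (snd p) - PP S y (fst p) (snd p)\<bar>)
        = (\<Sum>p\<in>?SS. \<bar>PP S x (fst p) (snd p) - PP S y (fst p) (snd p)\<bar>) - (\<Sum>p\<in>?SS. \<bar>C (fst p) (snd p)\<bar>)"
      unfolding D_def .
    have ge: "(\<Sum>p\<in>?SS. \<bar>C (fst p) (snd p)\<bar>) \<ge> 1"
    proof -
      have "(i 1, j 1) \<in> ?SS" using cyc(4,5) m1 by auto
      then have "\<bar>C (i 1) (j 1)\<bar> \<le> (\<Sum>p\<in>?SS. \<bar>C (fst p) (snd p)\<bar>)"
        using member_le_sum[of "(i 1, j 1)" ?SS "\<lambda>p. \<bar>C (fst p) (snd p)\<bar>"] by simp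
      then show ?thesis using C11 by simp
    qed
    have lt: "(\<Sum>p\<in>?SS. \<bar>PP S x3 (fst p) (snd p) - PP S y (fst p) (snd p)\<bar>)
        < (\<Sum>p\<in>?SS. \<bar>PP S x (fst p) (snd p) - PP S y (fst p) (snd p)\<bar>)"
      using eq1 ge by linarith
    have "(\<Sum>p\<in>?SS. \<bar>PP S x3 (fst p) (snd p) - PP S y (fst p) (snd p)\<bar>) \<ge> 0" by (simp add: sum_nonneg)
    then have "nat (\<Sum>p\<in>?SS. \<bar>PP S x3 (fst p) (snd p) - PP S y (fst p) (snd p)\<bar>)
        < nat (\<Sum>p\<in>?SS. \<bar>PP S x (fst p) (snd p) - PP S y (fst p) (snd p)\<bar>)" using lt by linarith
    then have c3: "conn (BB S) x3 y" using less.hyps tx3 ty E1' E2' by blast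
    show ?thesis using conn_trans[OF conn_trans[OF c1 c2] c3] .
  qed
qed


theorem proposition2:
  fixes S :: nat
  assumes "S \<ge> 2"
  shows "markov_basis S (crossing_swaps S \<union> zbar_moves S)"
  unfolding markov_basis_def
proof (intro conjI ballI allI impI)
  fix z assume "z \<in> crossing_swaps S \<union> zbar_moves S"
  then show "is_move S z" by (rule all_moves)
next
  fix x y assume h: "is_table S x \<and> is_table S y \<and> suff_stat S x = suff_stat S y"
  then have e: "(\<forall>i\<in>states S. (\<Sum>b\<in>states S. PP S x i b) = (\<Sum>b\<in>states S. PP S y i b)) \<and>
    (\<forall>i\<in>states S. \<forall>j\<in>states S. PP S x i j + QQ S x i j = PP S y i j + QQ S y i j)"
    using suff_eq by blast
  have "conn (crossing_swaps S \<union> zbar_moves S) x y"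
    using mainconn[of S x y] h e by blast
  then show "\<exists>zs :: table list.
         (\<forall>k<length zs. \<exists>z\<in>crossing_swaps S \<union> zbar_moves S. zs ! k = z \<or> zs ! k = (\<lambda>w. - z w)) \<and>
         (\<forall>w. y w = x w + (\<Sum>k<length zs. (zs ! k) w)) \<and>
         (\<forall>h\<le>length zs. \<forall>w. x w + (\<Sum>k<h. (zs ! k) w) \<ge> 0)"
    unfolding conn_def .
qed

end
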